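(* Let $\{n_j\}_{j\ge1}$ be an infinite sequence of positive integers with $n_j\mid n_{j+1}$ for all $j$. Let $A=\prod_{j=1}^\infty\mathbb{Z}_{n_j}$ with the product topology (each $\mathbb{Z}_{n_j}=\mathbb{Z}/n_j\mathbb{Z}$ discrete), let $E=(1,1,\dots)\in A$, and let $\bar B$ be the closure in $A$ of $\{nE=(n,n,\dots):n\in\mathbb{Z}\}$. For $k\in\mathbb{Z}$ let $b=kE=(k,k,\dots)$. Then $\{nb:n\in\mathbb{Z}\}$ is dense in $\bar B$ if and only if $\gcd(k,n_j)=1$ for every $j$.
   Context: $A$ is a compact abelian group under coordinatewise addition; its product topology is induced by the metric $\mathrm{dist}(x,y)=\sum_{j\ge1}2^{-j}\frac{\delta_j(x_j,y_j)}{1+\delta_j(x_j,y_j)}$ where $\delta_j$ is the discrete metric on $\mathbb{Z}_{n_j}$. An element $b\in\bar B$ is called a generator if $\{nb:n\in\mathbb{Z}\}$ is dense in $\bar B$. *)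

theory Defs
  imports "HOL-Analysis.Analysis"
begin

text \<open>The group A = product of Z_{n_j}. Coordinate j (indexed from 0, i.e. shifted by one)
  is represented by its canonical residue in {0..<n j}. A carries the product of
  the discrete topologies.\<close>

definition cyc_prod_top :: "(nat \<Rightarrow> nat) \<Rightarrow> (nat \<Rightarrow> int) topology" where
  "cyc_prod_top n = product_topology (\<lambda>j. discrete_topology {0..<int (n j)}) UNIV"

definition const_elt :: "(nat \<Rightarrow> nat) \<Rightarrow> int \<Rightarrow> (nat \<Rightarrow> int)" where
  "const_elt n k = (\<lambda>j. k mod int (n j))"

definition zmult :: "(nat \<Rightarrow> nat) \<Rightarrow> int \<Rightarrow> (nat \<Rightarrow> int) \<Rightarrow> (nat \<Rightarrow> int)" where
  "zmult n m x = (\<lambda>j. (m * x j) mod int (n j))"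

definition Bbar :: "(nat \<Rightarrow> nat) \<Rightarrow> (nat \<Rightarrow> int) set" where
  "Bbar n = (cyc_prod_top n) closure_of {zmult n m (const_elt n 1) | m. True}"

end

theory Submission
  imports Defs
begin

lemma dvd_chain:
  assumes "\<And>j. n j dvd n (Suc j)" "j \<le> N"
  shows "int (n j) dvd int (n N)"
  using assms(2)
proof (induction N)
  case 0 then show ?case by simp
next
  case (Suc N)
  show ?case
  proof (cases "j = Suc N")
    case True then show ?thesis by simp
  next
    case False
    then have "j \<le> N" using Suc.prems by simp
    then have "int (n j) dvd int (n N)" by (rule Suc.IH)
    moreover have "int (n N) dvd int (n (Suc N))" using assms(1)[of N] by simp
    ultimately show ?thesis by (rule dvd_trans)
  qed
qed

lemma coprime_solve:
  fixes k m N :: int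
  assumes "gcd k N = 1"
  shows "\<exists>m'. (m' * k) mod N = m mod N"
proof -
  obtain u v where "u * k + v * N = gcd k N" using bezout_int by blast
  with assms have "u * k + v * N = 1" by simp
  then have "m * (u * k + v * N) = m" by simp
  then have "m * u * k = m - m * v * N" by (simp add: algebra_simps)
  then show ?thesis by (intro exI[of _ "m*u"]) (simp add: mod_eq_dvd_iff)
qed

lemma solve_coprime:
  fixes k m N :: int
  assumes "(m * k) mod N = 1 mod N"
  shows "gcd k N = 1"
proof -
  have "N dvd m*k - 1" using assms by (simp add: mod_eq_dvd_iff)
  then have "gcd k N dvd m*k - 1" by (meson dvd_trans gcd_dvd2)
  moreover have "gcd k N dvd m*k" by simp
  ultimately have "gcd k N dvd (m*k) - (m*k - 1)" by (rule dvd_diff[rotated])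
  then have "gcd k N dvd 1" by simp
  then show ?thesis by simp
qed

theorem proposition4p7:
  fixes n :: "nat \<Rightarrow> nat" and k :: int
  assumes "\<And>j. n j > 0"
    and "\<And>j. n j dvd n (Suc j)"
  shows "(subtopology (cyc_prod_top n) (Bbar n)) closure_of
            {zmult n m (const_elt n k) | m. True} = Bbar n
         \<longleftrightarrow> (\<forall>j. gcd k (int (n j)) = 1)"
proof -
  define X where "X = cyc_prod_top n"
  define S1 where "S1 = {zmult n m (const_elt n 1) | m. True}"
  define Sk where "Sk = {zmult n m (const_elt n k) | m. True}"
  have zm: "zmult n m (const_elt n c) = (\<lambda>j. (m*c) mod int (n j))" for m c
    by (simp add: zmult_def const_elt_def mod_mult_right_eq)
  have top: "topspace X = {x. \<forall>j. x j \<in> {0..<int (n j)}}"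
    by (auto simp: X_def cyc_prod_top_def PiE_UNIV_domain)
  have S1top: "S1 \<subseteq> topspace X"
    using assms(1) by (auto simp: S1_def zm top)
  have SkS1: "Sk \<subseteq> S1"
    by (auto simp: S1_def Sk_def zm)
  have B: "Bbar n = X closure_of S1" by (simp add: Bbar_def X_def S1_def)
  have SkB: "Sk \<subseteq> Bbar n"
    using SkS1 S1top B closure_of_subset by blast
  have lhs: "subtopology X (Bbar n) closure_of Sk = X closure_of Sk"
    using closure_of_subtopology_open[of X "Bbar n" Sk] SkB SkS1 B closure_of_mono by blast
  have "X closure_of Sk = X closure_of S1 \<longleftrightarrow> (\<forall>j. gcd k (int (n j)) = 1)"
  proof
    assume eq: "X closure_of Sk = X closure_of S1"
    show "\<forall>j. gcd k (int (n j)) = 1"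
    proof
      fix j
      define E where "E = (\<lambda>i. 1 mod int (n i))"
      have "E \<in> S1" unfolding S1_def E_def zm by (rule CollectI, rule exI[of _ 1]) simp
      then have "E \<in> X closure_of Sk" using eq S1top closure_of_subset by blast
      moreover define U where "U = {x \<in> topspace X. x j \<in> {1 mod int (n j)}}"
      have "openin X U"
        unfolding U_def X_def cyc_prod_top_def
        by (rule openin_continuous_map_preimage[OF continuous_map_product_projection]) (use assms(1) in \<open>auto simp: pos_mod_bound\<close>)
      moreover have "E \<in> U" using \<open>E \<in> S1\<close> S1top by (auto simp: U_def E_def)
      ultimately obtain y where "y \<in> Sk" "y \<in> U" unfolding closure_of_def by blast
      then obtain m where "(m*k) mod int (n j) = 1 mod int (n j)"
        by (auto simp: Sk_def zm U_def)
      then show "gcd k (int (n j)) = 1" by (rule solve_coprime)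
    qed
  next
    assume cop: "\<forall>j. gcd k (int (n j)) = 1"
    have "S1 \<subseteq> X closure_of Sk"
    proof
      fix x assume "x \<in> S1"
      then obtain m where xm: "x = (\<lambda>j. m mod int (n j))" by (auto simp: S1_def zm)
      have xt: "x \<in> topspace X" using \<open>x \<in> S1\<close> S1top by blast
      show "x \<in> X closure_of Sk"
        unfolding closure_of_def
      proof (intro CollectI conjI allI impI xt)
        fix T assume xT: "x \<in> T \<and> openin X T"
        then obtain Y where Y: "x \<in> (\<Pi>\<^sub>E i\<in>UNIV. Y i)"
          "\<forall>i. openin (discrete_topology {0..<int (n i)}) (Y i)"
          "finite {i. Y i \<noteq> topspace (discrete_topology {0..<int (n i)})}"
          "(\<Pi>\<^sub>E i\<in>UNIV. Y i) \<subseteq> T"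
          using product_topology_open_contains_basis[of _ UNIV T x]
          unfolding X_def cyc_prod_top_def by blast
        define F where "F = {i. Y i \<noteq> {0..<int (n i)}}"
        have fF: "finite F" using Y(3) by (simp add: F_def)
        define N where "N = Max (insert 0 F)"
        have le: "i \<in> F \<Longrightarrow> i \<le> N" for i using fF by (simp add: N_def)
        obtain m' where m': "(m' * k) mod int (n N) = m mod int (n N)"
          using coprime_solve cop by blast
        define y where "y = (\<lambda>j. (m'*k) mod int (n j))"
        have "y \<in> Sk" by (auto simp: Sk_def zm y_def)
        moreover have "y \<in> (\<Pi>\<^sub>E i\<in>UNIV. Y i)"
        proof (unfold PiE_UNIV_domain, rule Pi_I)
          fix i
          show "y i \<in> Y i"
          proof (cases "i \<in> F")
            case True
            have d: "int (n i) dvd int (n N)" using dvd_chain[of n, OF assms(2) le[OF True]] .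
            have "y i = x i" unfolding y_def xm
              by (metis m' d mod_mod_cancel)
            then show ?thesis using Y(1) by auto
          next
            case False
            then have "Y i = {0..<int (n i)}" by (simp add: F_def)
            then show ?thesis using assms(1)[of i] by (simp add: y_def)
          qed
        qed
        ultimately show "\<exists>y\<in>Sk. y \<in> T" using Y(4) by blast
      qed
    qed
    then have "X closure_of S1 \<subseteq> X closure_of Sk"
      by (metis closure_of_closure_of closure_of_mono)
    moreover have "X closure_of Sk \<subseteq> X closure_of S1" using SkS1 closure_of_mono by blast
    ultimately show "X closure_of Sk = X closure_of S1" by blast
  qed
  then show ?thesis using lhs B by (simp add: X_def Sk_def)
qed

end
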